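(* Let $d\ge1$, let $\pi_0,\pi_1,\dots$ be probability densities on $\mathbb{R}^d$, and for $t\ge1$ let $T_t$ be a Markov kernel on $\mathbb{R}^d$ with $\pi_t$ stationary, $m_t\ge1$ an integer and $Q_t=T_t^{m_t}$. Assume there exist a measurable $V:\mathbb{R}^d\to[1,\infty)$, a constant $C>0$ and $\rho_t\in(0,1)$ such that $\int V^2\pi_t\le C$ for all $t\ge0$ and $$\|T_t(x,\cdot)-\pi_t\|_V\le V(x)\rho_t\quad\text{for all }x\in\mathbb{R}^d,\ t\ge1 .$$ Let $\epsilon_t=\rho_t^{m_t}$ and $\alpha_t=2\sqrt{C}\,d_H(\pi_t,\pi_{t-1})$. Then for every $t\ge1$, $$\|Q_t\circ\cdots\circ Q_1\circ\pi_0-\pi_t\|_1\le\sum_{s=1}^t\Big\{\prod_{u=s}^t\epsilon_u\Big\}\alpha_s .$$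
   Context: $\|\mu\|_V=\sup_{|f|\le V}|\int f\,d\mu|$ for a signed measure $\mu$; $\|\cdot\|_1$ is the $L_1$ (total variation) norm. The Hellinger distance is $d_H(p,q)=\big(\int(\sqrt{p(x)}-\sqrt{q(x)})^2dx\big)^{1/2}$. $T^m$ is the $m$-step kernel and $K\circ p$ denotes the law $A\mapsto\int p(z)K(z,A)\,dz$; $Q_t\circ\cdots\circ Q_1\circ\pi_0$ is the law after running $m_s$ steps of $T_s$ in stages $s=1,\dots,t$ starting from $\pi_0$. *)

theory Defs
  imports "HOL-Probability.Probability"
begin

definition vnorm :: "('a \<Rightarrow> real) \<Rightarrow> 'a measure \<Rightarrow> 'a measure \<Rightarrow> ereal" where
  "vnorm V \<mu> \<nu> =
     (SUP f \<in> {f \<in> borel_measurable \<mu>. \<forall>x\<in>space \<mu>. \<bar>f x\<bar> \<le> V x}.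
        (if integrable \<mu> f \<and> integrable \<nu> f
         then ereal \<bar>(\<integral>x. f x \<partial>\<mu>) - (\<integral>x. f x \<partial>\<nu>)\<bar> else \<infinity>))"

definition tvnorm :: "'a measure \<Rightarrow> 'a measure \<Rightarrow> ereal" where
  "tvnorm \<mu> \<nu> = vnorm (\<lambda>_. 1) \<mu> \<nu>"

definition hellinger :: "('a::euclidean_space \<Rightarrow> real) \<Rightarrow> ('a \<Rightarrow> real) \<Rightarrow> real" where
  "hellinger p q = sqrt (\<integral>x. (sqrt (p x) - sqrt (q x))\<^sup>2 \<partial>lborel)"

primrec kpow :: "('a::topological_space \<Rightarrow> 'a measure) \<Rightarrow> nat \<Rightarrow> 'a \<Rightarrow> 'a measure" where
  "kpow K 0 = (\<lambda>x. return borel x)"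
| "kpow K (Suc n) = (\<lambda>x. bind (kpow K n x) K)"

primrec law :: "(nat \<Rightarrow> 'a::euclidean_space \<Rightarrow> real) \<Rightarrow> (nat \<Rightarrow> 'a \<Rightarrow> 'a measure)
                  \<Rightarrow> (nat \<Rightarrow> nat) \<Rightarrow> nat \<Rightarrow> 'a measure" where
  "law \<pi> T m 0 = density lborel (\<pi> 0)"
| "law \<pi> T m (Suc t) = bind (law \<pi> T m t) (kpow (T (Suc t)) (m (Suc t)))"

end

theory Submission
  imports Defs
begin

lemma bind_nonneg:
  fixes g :: "'a::euclidean_space \<Rightarrow> real"
  assumes K: "K \<in> borel \<rightarrow>\<^sub>M prob_algebra borel"
    and sm: "sets \<mu> = sets borel"
    and g[measurable]: "g \<in> borel_measurable borel" and gnn: "\<And>x. g x \<ge> 0"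
    and gi: "\<And>x. integrable (K x) g"
    and mi: "integrable \<mu> (\<lambda>x. \<integral>y. g y \<partial>K x)"
  shows "integrable (bind \<mu> K) g \<and> (\<integral>y. g y \<partial>bind \<mu> K) = (\<integral>x. (\<integral>y. g y \<partial>K x) \<partial>\<mu>)"
proof -
  have K': "K \<in> \<mu> \<rightarrow>\<^sub>M subprob_algebra borel"
    using measurable_prob_algebraD[OF K] sm by (simp cong: measurable_cong_sets)
  have "(\<integral>\<^sup>+y. g y \<partial>bind \<mu> K) = (\<integral>\<^sup>+x. (\<integral>\<^sup>+y. g y \<partial>K x) \<partial>\<mu>)"
    by (rule nn_integral_bind[OF _ K']) simp
  also have "\<dots> = (\<integral>\<^sup>+x. ennreal (\<integral>y. g y \<partial>K x) \<partial>\<mu>)"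
    by (rule nn_integral_cong) (simp add: nn_integral_eq_integral[OF gi] gnn)
  also have "\<dots> = ennreal (\<integral>x. (\<integral>y. g y \<partial>K x) \<partial>\<mu>)"
    by (rule nn_integral_eq_integral[OF mi]) (simp add: gnn)
  finally have eq: "(\<integral>\<^sup>+y. g y \<partial>bind \<mu> K) = ennreal (\<integral>x. (\<integral>y. g y \<partial>K x) \<partial>\<mu>)" .
  have sb: "sets (bind \<mu> K) = sets borel"
    using K' sets_eq_imp_space_eq[OF sm] by (intro sets_bind) (auto dest: sets_kernel)
  have gm: "g \<in> borel_measurable (bind \<mu> K)" using sb by (simp cong: measurable_cong_sets)
  have "integrable (bind \<mu> K) g \<and> integral\<^sup>L (bind \<mu> K) g = (\<integral>x. (\<integral>y. g y \<partial>K x) \<partial>\<mu>)"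
    by (rule nn_integral_eq_integrable[THEN iffD1, OF gm _ _ eq]) (auto simp: gnn intro!: integral_nonneg_AE AE_I2)
  thus ?thesis by simp
qed

lemma bind_V:
  fixes f V :: "'a::euclidean_space \<Rightarrow> real"
  assumes K: "K \<in> borel \<rightarrow>\<^sub>M prob_algebra borel"
    and sm: "sets \<mu> = sets borel" and fin: "finite_measure \<mu>"
    and Vm[measurable]: "V \<in> borel_measurable borel"
    and Vi: "\<And>x. integrable (K x) V"
    and mi: "integrable \<mu> (\<lambda>x. \<integral>y. V y \<partial>K x)"
    and f[measurable]: "f \<in> borel_measurable borel" and fV: "\<And>x. \<bar>f x\<bar> \<le> V x"
  shows "integrable (bind \<mu> K) f \<and> (\<integral>y. f y \<partial>bind \<mu> K) = (\<integral>x. (\<integral>y. f y \<partial>K x) \<partial>\<mu>)"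
proof -
  have sK: "\<And>x. sets (K x) = sets borel"
    using measurable_space[OF K] by (auto simp: space_prob_algebra)
  have pK: "\<And>x. prob_space (K x)"
    using measurable_space[OF K] by (auto simp: space_prob_algebra)
  have gen: "integrable (bind \<mu> K) g \<and> (\<integral>y. g y \<partial>bind \<mu> K) = (\<integral>x. (\<integral>y. g y \<partial>K x) \<partial>\<mu>)
     \<and> (\<forall>x. integrable (K x) g) \<and> integrable \<mu> (\<lambda>x. \<integral>y. g y \<partial>K x)"
    if gm[measurable]: "g \<in> borel_measurable borel" and gnn: "\<And>x. g x \<ge> 0" and gV: "\<And>x. g x \<le> V x" for g
  proof -
    have gi: "integrable (K x) g" for x
      by (rule Bochner_Integration.integrable_bound[OF Vi]) (use sK gnn gV in \<open>auto cong: measurable_cong_sets intro!: AE_I2 simp: abs_le_iff intro: order_trans[OF _ abs_ge_self]\<close>)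
    have meas: "(\<lambda>x. \<integral>y. g y \<partial>K x) \<in> borel_measurable \<mu>"
      using measurable_compose[OF measurable_prob_algebraD[OF K] integral_measurable_subprob_algebra[OF gm]] sm
      by (simp cong: measurable_cong_sets)
    have mgi: "integrable \<mu> (\<lambda>x. \<integral>y. g y \<partial>K x)"
    proof (rule Bochner_Integration.integrable_bound[OF mi meas], rule AE_I2)
      fix x
      have "0 \<le> (\<integral>y. g y \<partial>K x)" by (simp add: gnn)
      moreover have "(\<integral>y. g y \<partial>K x) \<le> (\<integral>y. V y \<partial>K x)"
        by (rule integral_mono[OF gi Vi]) (simp add: gV)
      ultimately show "norm (\<integral>y. g y \<partial>K x) \<le> norm (\<integral>y. V y \<partial>K x)" by simp
    qed
    show ?thesis using bind_nonneg[OF K sm gm gnn gi mgi] gi mgi by simp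
  qed
  have p: "integrable (bind \<mu> K) (\<lambda>x. max (f x) 0) \<and> (\<integral>y. max (f y) 0 \<partial>bind \<mu> K) = (\<integral>x. (\<integral>y. max (f y) 0 \<partial>K x) \<partial>\<mu>)
     \<and> (\<forall>x. integrable (K x) (\<lambda>x. max (f x) 0)) \<and> integrable \<mu> (\<lambda>x. \<integral>y. max (f y) 0 \<partial>K x)"
    by (rule gen) (use fV in \<open>auto simp: abs_le_iff intro: order_trans[OF abs_ge_zero fV]\<close>)
  have n: "integrable (bind \<mu> K) (\<lambda>x. max (- f x) 0) \<and> (\<integral>y. max (- f y) 0 \<partial>bind \<mu> K) = (\<integral>x. (\<integral>y. max (- f y) 0 \<partial>K x) \<partial>\<mu>)
     \<and> (\<forall>x. integrable (K x) (\<lambda>x. max (- f x) 0)) \<and> integrable \<mu> (\<lambda>x. \<integral>y. max (- f y) 0 \<partial>K x)"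
    by (rule gen) (use fV in \<open>auto simp: abs_le_iff intro: order_trans[OF abs_ge_zero fV]\<close>)
  have fe: "f = (\<lambda>x. max (f x) 0 - max (- f x) 0)" by (auto simp: fun_eq_iff)
  have i1: "integrable (bind \<mu> K) f" using p n by (subst fe) auto
  have "(\<integral>y. f y \<partial>bind \<mu> K) = (\<integral>y. max (f y) 0 \<partial>bind \<mu> K) - (\<integral>y. max (- f y) 0 \<partial>bind \<mu> K)"
    using p n by (subst fe) (simp add: Bochner_Integration.integral_diff)
  also have "\<dots> = (\<integral>x. (\<integral>y. max (f y) 0 \<partial>K x) - (\<integral>y. max (- f y) 0 \<partial>K x) \<partial>\<mu>)"
    using p n by (simp add: Bochner_Integration.integral_diff)
  also have "\<dots> = (\<integral>x. (\<integral>y. f y \<partial>K x) \<partial>\<mu>)"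
    by (rule Bochner_Integration.integral_cong[OF refl]) (use p n in \<open>subst (3) fe, simp add: Bochner_Integration.integral_diff\<close>)
  finally show ?thesis using i1 by simp
qed

definition Bnd :: "('a::euclidean_space \<Rightarrow> real) \<Rightarrow> 'a measure \<Rightarrow> 'a measure \<Rightarrow> real \<Rightarrow> bool" where
  "Bnd V \<mu> \<nu> B \<longleftrightarrow> (\<forall>f \<in> borel_measurable borel. (\<forall>x. \<bar>f x\<bar> \<le> V x) \<longrightarrow>
     integrable \<mu> f \<and> integrable \<nu> f \<and> \<bar>(\<integral>x. f x \<partial>\<mu>) - (\<integral>x. f x \<partial>\<nu>)\<bar> \<le> B)"

lemma BndD:
  assumes "Bnd V \<mu> \<nu> B" "f \<in> borel_measurable borel" "\<And>x. \<bar>f x\<bar> \<le> V x"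
  shows "integrable \<mu> f" "integrable \<nu> f" "\<bar>(\<integral>x. f x \<partial>\<mu>) - (\<integral>x. f x \<partial>\<nu>)\<bar> \<le> B"
  using assms unfolding Bnd_def by auto

lemma Bnd_trans:
  assumes "Bnd V \<mu> \<nu> B" "Bnd V \<nu> \<xi> A" shows "Bnd V \<mu> \<xi> (B + A)"
  using assms unfolding Bnd_def by (smt (verit, best))

lemma contract:
  fixes V :: "'a::euclidean_space \<Rightarrow> real"
  assumes K: "K \<in> borel \<rightarrow>\<^sub>M prob_algebra borel"
    and P: "prob_space P" and sP: "sets P = sets borel" and stat: "bind P K = P"
    and rho: "\<rho> > 0"
    and KB: "\<And>x. Bnd V (K x) P (\<rho> * V x)"
    and Vm[measurable]: "V \<in> borel_measurable borel" and V0: "\<And>x. V x \<ge> 0"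
    and mu: "prob_space \<mu>" and sm: "sets \<mu> = sets borel" and muB: "Bnd V \<mu> P B"
  shows "Bnd V (bind \<mu> K) P (\<rho> * B)"
  unfolding Bnd_def
proof (intro ballI impI conjI)
  have Vabs: "\<And>x. \<bar>V x\<bar> \<le> V x" using V0 by simp
  have VK: "\<And>x. integrable (K x) V" using BndD(1)[OF KB Vm Vabs] .
  have Kb: "\<And>x. \<bar>(\<integral>y. V y \<partial>K x) - (\<integral>y. V y \<partial>P)\<bar> \<le> \<rho> * V x" using BndD(3)[OF KB Vm Vabs] .
  have mi: "integrable M (\<lambda>x. \<integral>y. V y \<partial>K x)"
    if M: "prob_space M" "sets M = sets borel" "integrable M V" for M
  proof -
    interpret M: prob_space M by (rule M)
    have meas: "(\<lambda>x. \<integral>y. V y \<partial>K x) \<in> borel_measurable M"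
      using measurable_compose[OF measurable_prob_algebraD[OF K] integral_measurable_subprob_algebra[OF Vm]] M(2)
      by (simp cong: measurable_cong_sets)
    have ib: "integrable M (\<lambda>x. \<bar>\<integral>y. V y \<partial>P\<bar> + \<rho> * V x)"
      using M(3) by simp
    show ?thesis
    proof (rule Bochner_Integration.integrable_bound[OF ib meas], rule AE_I2)
      fix x show "norm (\<integral>y. V y \<partial>K x) \<le> norm (\<bar>\<integral>y. V y \<partial>P\<bar> + \<rho> * V x)"
        using Kb[of x] rho V0[of x] by (simp add: abs_le_iff) linarith
    qed
  qed
  have Vmu: "integrable \<mu> V" using BndD(1)[OF muB Vm Vabs] .
  have VP: "integrable P V" using BndD(2)[OF muB Vm Vabs] .
  interpret mu: prob_space \<mu> by (rule mu)
  interpret P: prob_space P by (rule P)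
  fix f :: "'a \<Rightarrow> real" assume f[measurable]: "f \<in> borel_measurable borel" and fV: "\<forall>x. \<bar>f x\<bar> \<le> V x"
  then have fV': "\<And>x. \<bar>f x\<bar> \<le> V x" by simp
  have bm: "integrable (bind \<mu> K) f \<and> (\<integral>y. f y \<partial>bind \<mu> K) = (\<integral>x. (\<integral>y. f y \<partial>K x) \<partial>\<mu>)"
    by (rule bind_V[OF K sm _ Vm VK mi[OF mu sm Vmu] f fV']) (simp add: mu.finite_measure_axioms)
  have bP: "integrable (bind P K) f \<and> (\<integral>y. f y \<partial>bind P K) = (\<integral>x. (\<integral>y. f y \<partial>K x) \<partial>P)"
    by (rule bind_V[OF K sP _ Vm VK mi[OF P sP VP] f fV']) (simp add: P.finite_measure_axioms)
  show "integrable (bind \<mu> K) f" using bm by simp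
  show "integrable P f" using BndD(2)[OF muB f fV'] .
  define c where "c = (\<integral>y. f y \<partial>P)"
  define g where "g x = (\<integral>y. f y \<partial>K x)" for x
  define h where "h x = (g x - c) / \<rho>" for x
  have gm[measurable]: "g \<in> borel_measurable borel"
    unfolding g_def using measurable_compose[OF measurable_prob_algebraD[OF K] integral_measurable_subprob_algebra[OF f]] .
  have hm: "h \<in> borel_measurable borel" unfolding h_def by measurable
  have gc: "\<bar>g x - c\<bar> \<le> \<rho> * V x" for x
    unfolding g_def c_def using BndD(3)[OF KB f fV'] .
  have hV: "\<And>x. \<bar>h x\<bar> \<le> V x"
    using gc rho unfolding h_def by (simp add: abs_div divide_le_eq mult.commute)
  have hmu: "integrable \<mu> h" and hP: "integrable P h" and hB: "\<bar>(\<integral>x. h x \<partial>\<mu>) - (\<integral>x. h x \<partial>P)\<bar> \<le> B"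
    using BndD[OF muB hm hV] by auto
  have ge: "g = (\<lambda>x. \<rho> * h x + c)" using rho by (auto simp: h_def fun_eq_iff)
  have "(\<integral>x. g x \<partial>\<mu>) = \<rho> * (\<integral>x. h x \<partial>\<mu>) + c"
    unfolding ge using hmu by (simp add: Bochner_Integration.integral_add mu.prob_space)
  moreover have "(\<integral>x. g x \<partial>P) = \<rho> * (\<integral>x. h x \<partial>P) + c"
    unfolding ge using hP by (simp add: Bochner_Integration.integral_add P.prob_space)
  moreover have "(\<integral>x. g x \<partial>P) = c"
    using bP stat unfolding g_def c_def by simp
  moreover have "(\<integral>y. f y \<partial>bind \<mu> K) = (\<integral>x. g x \<partial>\<mu>)" using bm unfolding g_def by simp
  ultimately have "(\<integral>y. f y \<partial>bind \<mu> K) - (\<integral>y. f y \<partial>P) = \<rho> * ((\<integral>x. h x \<partial>\<mu>) - (\<integral>x. h x \<partial>P))"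
    unfolding c_def by (simp add: algebra_simps)
  then have "\<bar>(\<integral>y. f y \<partial>bind \<mu> K) - (\<integral>y. f y \<partial>P)\<bar> = \<rho> * \<bar>(\<integral>x. h x \<partial>\<mu>) - (\<integral>x. h x \<partial>P)\<bar>"
    using rho by (simp add: abs_mult)
  also have "\<dots> \<le> \<rho> * B" using hB rho by simp
  finally show "\<bar>(\<integral>y. f y \<partial>bind \<mu> K) - (\<integral>y. f y \<partial>P)\<bar> \<le> \<rho> * B" .
qed

lemma kpow_meas:
  assumes K: "K \<in> borel \<rightarrow>\<^sub>M prob_algebra borel"
  shows "kpow K n \<in> borel \<rightarrow>\<^sub>M prob_algebra borel"
proof (induction n)
  case 0 show ?case using measurable_return_prob_space[of borel] by (simp add: comp_def)
next
  case (Suc n) show ?case using measurable_bind_prob_space[OF Suc K] by simp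
qed

lemma bind_prob:
  assumes K: "K \<in> borel \<rightarrow>\<^sub>M prob_algebra borel"
    and mu: "prob_space \<mu>" and sm: "sets \<mu> = sets borel"
  shows "prob_space (bind \<mu> K)" "sets (bind \<mu> K) = sets borel"
proof -
  have "\<mu> \<in> space (prob_algebra borel)" using mu sm by (simp add: space_prob_algebra)
  then show "prob_space (bind \<mu> K)" "sets (bind \<mu> K) = sets borel"
    using prob_space_bind' sets_bind' K by blast+
qed

lemma contract_pow:
  fixes V :: "'a::euclidean_space \<Rightarrow> real"
  assumes K: "K \<in> borel \<rightarrow>\<^sub>M prob_algebra borel"
    and P: "prob_space P" and sP: "sets P = sets borel" and stat: "bind P K = P"
    and rho: "\<rho> > 0"
    and KB: "\<And>x. Bnd V (K x) P (\<rho> * V x)"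
    and Vm[measurable]: "V \<in> borel_measurable borel" and V0: "\<And>x. V x \<ge> 0"
    and mu: "prob_space \<mu>" and sm: "sets \<mu> = sets borel" and muB: "Bnd V \<mu> P B"
  shows "Bnd V (bind \<mu> (kpow K n)) P (\<rho> ^ n * B)"
proof (induction n)
  case 0
  have "bind \<mu> (kpow K 0) = \<mu>" using bind_return''[OF sm] by (simp add: comp_def)
  then show ?case using muB by simp
next
  case (Suc n)
  have M1: "kpow K n \<in> \<mu> \<rightarrow>\<^sub>M subprob_algebra borel"
    using measurable_prob_algebraD[OF kpow_meas[OF K, of n]] sm by (simp cong: measurable_cong_sets)
  have eq: "bind \<mu> (kpow K (Suc n)) = bind (bind \<mu> (kpow K n)) K"
    using bind_assoc[OF M1 measurable_prob_algebraD[OF K]] by simp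
  have "Bnd V (bind (bind \<mu> (kpow K n)) K) P (\<rho> * (\<rho> ^ n * B))"
    by (rule contract[OF K P sP stat rho KB Vm V0 bind_prob[OF kpow_meas[OF K] mu sm] Suc])
  then show ?case using eq by (simp add: mult.assoc)
qed

lemma amgm_pt:
  fixes a b f v l :: real
  assumes a: "a \<ge> 0" and b: "b \<ge> 0" and fv: "\<bar>f\<bar> \<le> v" and l: "l > 0"
  shows "\<bar>f * (a\<^sup>2 - b\<^sup>2)\<bar> \<le> l * (v\<^sup>2 * a\<^sup>2 + v\<^sup>2 * b\<^sup>2) + (b - a)\<^sup>2 / (2 * l)"
proof -
  define X where "X = v * (a + b)"
  define Y where "Y = \<bar>a - b\<bar>"
  have v0: "v \<ge> 0" using fv by linarith
  have "\<bar>f * (a\<^sup>2 - b\<^sup>2)\<bar> = \<bar>f\<bar> * ((a + b) * Y)"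
  proof -
    have "f * (a\<^sup>2 - b\<^sup>2) = f * ((a + b) * (a - b))" by (simp add: power2_eq_square algebra_simps)
    then have "\<bar>f * (a\<^sup>2 - b\<^sup>2)\<bar> = \<bar>f\<bar> * (\<bar>a + b\<bar> * \<bar>a - b\<bar>)" by (simp only: abs_mult)
    then show ?thesis unfolding Y_def using a b by simp
  qed
  also have "\<dots> \<le> v * ((a + b) * Y)"
    by (rule mult_right_mono[OF fv]) (use a b in \<open>simp add: Y_def\<close>)
  also have "\<dots> = X * Y" by (simp add: X_def)
  also have "X * Y \<le> l * X\<^sup>2 / 2 + Y\<^sup>2 / (2 * l)"
  proof -
    have "0 \<le> (l * X - Y)\<^sup>2" by simp
    then have "2 * l * (X * Y) \<le> l * (l * X\<^sup>2) + Y\<^sup>2" by (simp add: power2_eq_square algebra_simps)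
    then show ?thesis using l by (simp add: field_simps)
  qed
  also have "X\<^sup>2 \<le> 2 * (v\<^sup>2 * a\<^sup>2 + v\<^sup>2 * b\<^sup>2)"
  proof -
    have "X\<^sup>2 = v\<^sup>2 * (a + b)\<^sup>2" by (simp add: X_def power_mult_distrib)
    also have "\<dots> \<le> v\<^sup>2 * (2 * (a\<^sup>2 + b\<^sup>2))"
    proof (rule mult_left_mono)
      have "0 \<le> (a - b)\<^sup>2" by simp
      then show "(a + b)\<^sup>2 \<le> 2 * (a\<^sup>2 + b\<^sup>2)" by (simp add: power2_eq_square algebra_simps)
    qed simp
    finally show ?thesis by (simp add: algebra_simps)
  qed
  then have "l * X\<^sup>2 / 2 \<le> l * (v\<^sup>2 * a\<^sup>2 + v\<^sup>2 * b\<^sup>2)" using l by simp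
  moreover have "Y\<^sup>2 / (2 * l) = (b - a)\<^sup>2 / (2 * l)" by (simp add: Y_def power2_commute)
  ultimately show ?thesis by linarith
qed

lemma final_real:
  fixes D H C :: real
  assumes H: "H \<ge> 0" and C: "C > 0" and all: "\<And>l. l > 0 \<Longrightarrow> D \<le> 2 * l * C + H\<^sup>2 / (2 * l)"
  shows "D \<le> 2 * sqrt C * H"
proof (cases "H > 0")
  case True
  define l where "l = H / (2 * sqrt C)"
  have l: "l > 0" using True C by (simp add: l_def)
  have sC: "sqrt C > 0" "(sqrt C)\<^sup>2 = C" using C by auto
  have "2 * l * C + H\<^sup>2 / (2 * l) = 2 * sqrt C * H"
    unfolding l_def using True sC by (simp add: field_simps power2_eq_square)
  then show ?thesis using all[OF l] by simp
next
  case False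
  then have H0: "H = 0" using H by simp
  show ?thesis
  proof (rule ccontr)
    assume "\<not> ?thesis"
    then have D: "D > 0" using H0 by simp
    have "D \<le> 2 * (D / (4 * C)) * C" using all[of "D / (4 * C)"] D C H0 by simp
    then show False using D C by (simp add: field_simps)
  qed
qed

lemma dens_facts:
  fixes p V :: "'a::euclidean_space \<Rightarrow> real"
  assumes pm[measurable]: "p \<in> borel_measurable borel" and p0: "\<And>x. p x \<ge> 0"
    and pn: "(\<integral>\<^sup>+x. ennreal (p x) \<partial>lborel) = 1"
    and Vm[measurable]: "V \<in> borel_measurable borel"
    and pV: "(\<integral>\<^sup>+x. ennreal ((V x)\<^sup>2 * p x) \<partial>lborel) \<le> ennreal C" and C: "C > 0"
  shows "integrable lborel p" "integrable lborel (\<lambda>x. (V x)\<^sup>2 * p x)"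
    "(\<integral>x. (V x)\<^sup>2 * p x \<partial>lborel) \<le> C"
    "prob_space (density lborel p)" "sets (density lborel p) = sets borel"
proof -
  show "integrable lborel p"
    using nn_integral_eq_integrable[of p lborel 1] pn p0 by simp
  have fin: "(\<integral>\<^sup>+x. ennreal ((V x)\<^sup>2 * p x) \<partial>lborel) < \<infinity>"
    using pV by (simp add: le_less_trans)
  show i2: "integrable lborel (\<lambda>x. (V x)\<^sup>2 * p x)"
    by (rule integrableI_nonneg) (use fin p0 in auto)
  have "ennreal (\<integral>x. (V x)\<^sup>2 * p x \<partial>lborel) \<le> ennreal C"
    using pV nn_integral_eq_integral[OF i2] p0 by simp
  then show "(\<integral>x. (V x)\<^sup>2 * p x \<partial>lborel) \<le> C" using C by (simp add: ennreal_le_iff)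
  show "sets (density lborel p) = sets borel" by simp
  show "prob_space (density lborel p)"
    by (rule prob_spaceI) (simp add: emeasure_density pn)
qed

lemma hell_bnd:
  fixes p q V :: "'a::euclidean_space \<Rightarrow> real"
  assumes pm[measurable]: "p \<in> borel_measurable borel" and p0: "\<And>x. p x \<ge> 0"
    and pn: "(\<integral>\<^sup>+x. ennreal (p x) \<partial>lborel) = 1"
    and qm[measurable]: "q \<in> borel_measurable borel" and q0: "\<And>x. q x \<ge> 0"
    and qn: "(\<integral>\<^sup>+x. ennreal (q x) \<partial>lborel) = 1"
    and Vm[measurable]: "V \<in> borel_measurable borel" and V1: "\<And>x. V x \<ge> 1"
    and pV: "(\<integral>\<^sup>+x. ennreal ((V x)\<^sup>2 * p x) \<partial>lborel) \<le> ennreal C"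
    and qV: "(\<integral>\<^sup>+x. ennreal ((V x)\<^sup>2 * q x) \<partial>lborel) \<le> ennreal C" and C: "C > 0"
  shows "Bnd V (density lborel p) (density lborel q) (2 * sqrt C * hellinger q p)"
  unfolding Bnd_def
proof (intro ballI impI conjI)
  note P = dens_facts[OF pm p0 pn Vm pV C]
  note Q = dens_facts[OF qm q0 qn Vm qV C]
  define h where "h x = (sqrt (q x) - sqrt (p x))\<^sup>2" for x
  have hm[measurable]: "h \<in> borel_measurable borel" unfolding h_def by measurable
  have h_le: "h x \<le> p x + q x" for x
  proof -
    have "h x = q x + p x - 2 * sqrt (q x) * sqrt (p x)"
      unfolding h_def using p0[of x] q0[of x] by (simp add: power2_diff)
    moreover have "sqrt (q x) * sqrt (p x) \<ge> 0" using p0[of x] q0[of x] by simp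
    ultimately show ?thesis by linarith
  qed
  have hi: "integrable lborel h"
    by (rule Bochner_Integration.integrable_bound[of _ "\<lambda>x. p x + q x"]) (use P(1) Q(1) h_le p0 q0 in \<open>auto simp: h_def\<close>)
  have hH: "(\<integral>x. h x \<partial>lborel) = (hellinger q p)\<^sup>2" and H0: "hellinger q p \<ge> 0"
  proof -
    have "(\<integral>x. h x \<partial>lborel) \<ge> 0" by (simp add: h_def)
    then show "(\<integral>x. h x \<partial>lborel) = (hellinger q p)\<^sup>2"
      unfolding hellinger_def h_def by simp
    show "hellinger q p \<ge> 0" unfolding hellinger_def by simp
  qed
  fix f :: "'a \<Rightarrow> real" assume f[measurable]: "f \<in> borel_measurable borel" and fV: "\<forall>x. \<bar>f x\<bar> \<le> V x"
  have pf: "integrable lborel (\<lambda>x. p x * f x)"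
  proof (rule Bochner_Integration.integrable_bound[OF P(2)], simp, rule AE_I2)
    fix x
    have "\<bar>f x\<bar> \<le> (V x)\<^sup>2" proof -
      have "V x * 1 \<le> V x * V x" using V1[of x] by (intro mult_left_mono) auto
      then show ?thesis using fV[rule_format, of x] by (simp add: power2_eq_square)
    qed
    then show "norm (p x * f x) \<le> norm ((V x)\<^sup>2 * p x)" using p0[of x] by (simp add: abs_mult mult_left_mono mult.commute)
  qed
  have qf: "integrable lborel (\<lambda>x. q x * f x)"
  proof (rule Bochner_Integration.integrable_bound[OF Q(2)], simp, rule AE_I2)
    fix x
    have "\<bar>f x\<bar> \<le> (V x)\<^sup>2" proof -
      have "V x * 1 \<le> V x * V x" using V1[of x] by (intro mult_left_mono) auto
      then show ?thesis using fV[rule_format, of x] by (simp add: power2_eq_square)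
    qed
    then show "norm (q x * f x) \<le> norm ((V x)\<^sup>2 * q x)" using q0[of x] by (simp add: abs_mult mult_left_mono mult.commute)
  qed
  show "integrable (density lborel p) f" using pf p0 by (simp add: integrable_density)
  show "integrable (density lborel q) f" using qf q0 by (simp add: integrable_density)
  have Dp: "(\<integral>x. f x \<partial>density lborel p) = (\<integral>x. p x * f x \<partial>lborel)" using p0 by (simp add: integral_density)
  have Dq: "(\<integral>x. f x \<partial>density lborel q) = (\<integral>x. q x * f x \<partial>lborel)" using q0 by (simp add: integral_density)
  define D where "D = \<bar>(\<integral>x. f x \<partial>density lborel p) - (\<integral>x. f x \<partial>density lborel q)\<bar>"
  have "D \<le> 2 * l * C + (hellinger q p)\<^sup>2 / (2 * l)" if l: "l > 0" for l
  proof -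
    have sq: "\<And>x. (sqrt (p x))\<^sup>2 = p x" "\<And>x. (sqrt (q x))\<^sup>2 = q x" using p0 q0 by auto
    have "(\<integral>x. p x * f x \<partial>lborel) - (\<integral>x. q x * f x \<partial>lborel) = (\<integral>x. p x * f x - q x * f x \<partial>lborel)"
      by (rule Bochner_Integration.integral_diff[OF pf qf, symmetric])
    also have "\<dots> = (\<integral>x. f x * (p x - q x) \<partial>lborel)"
      by (rule Bochner_Integration.integral_cong) (auto simp: right_diff_distrib)
    finally have "D = \<bar>\<integral>x. f x * (p x - q x) \<partial>lborel\<bar>"
      unfolding D_def Dp Dq by (simp only:)
    also have "\<dots> \<le> (\<integral>x. \<bar>f x * (p x - q x)\<bar> \<partial>lborel)"
      by (rule integral_abs_bound)
    also have "\<dots> \<le> (\<integral>x. l * ((V x)\<^sup>2 * p x + (V x)\<^sup>2 * q x) + h x / (2 * l) \<partial>lborel)"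
    proof (rule integral_mono)
      show "integrable lborel (\<lambda>x. l * ((V x)\<^sup>2 * p x + (V x)\<^sup>2 * q x) + h x / (2 * l))"
        using P(2) Q(2) hi by simp
      have "integrable lborel (\<lambda>x. p x * f x - q x * f x)" using pf qf by simp
      then have "integrable lborel (\<lambda>x. f x * (p x - q x))"
        by (rule back_subst[of "integrable lborel"]) (auto simp: fun_eq_iff right_diff_distrib)
      then show "integrable lborel (\<lambda>x. \<bar>f x * (p x - q x)\<bar>)"
        by (rule integrable_abs)
      fix x
      have "\<bar>f x * ((sqrt (p x))\<^sup>2 - (sqrt (q x))\<^sup>2)\<bar> \<le> l * ((V x)\<^sup>2 * (sqrt (p x))\<^sup>2 + (V x)\<^sup>2 * (sqrt (q x))\<^sup>2) + (sqrt (q x) - sqrt (p x))\<^sup>2 / (2 * l)"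
        by (rule amgm_pt) (use fV l p0[of x] q0[of x] in auto)
      then show "\<bar>f x * (p x - q x)\<bar> \<le> l * ((V x)\<^sup>2 * p x + (V x)\<^sup>2 * q x) + h x / (2 * l)"
        unfolding sq h_def .
    qed
    also have "\<dots> = l * ((\<integral>x. (V x)\<^sup>2 * p x \<partial>lborel) + (\<integral>x. (V x)\<^sup>2 * q x \<partial>lborel)) + (\<integral>x. h x \<partial>lborel) / (2 * l)"
      using P(2) Q(2) hi by simp
    also have "\<dots> \<le> l * (C + C) + (hellinger q p)\<^sup>2 / (2 * l)"
      using P(3) Q(3) l hH by (simp add: add_mono)
    finally show ?thesis by simp
  qed
  then have "D \<le> 2 * sqrt C * hellinger q p" by (intro final_real[OF H0 C]) auto
  then show "\<bar>(\<integral>x. f x \<partial>density lborel p) - (\<integral>x. f x \<partial>density lborel q)\<bar> \<le> 2 * sqrt C * hellinger q p"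
    unfolding D_def .
qed

lemma vnorm_Bnd:
  assumes v: "vnorm V M N \<le> ereal B" and sM: "sets M = sets borel"
  shows "Bnd V M N B"
  unfolding Bnd_def
proof (intro ballI impI)
  fix f :: "'a::euclidean_space \<Rightarrow> real" assume f: "f \<in> borel_measurable borel" and fV: "\<forall>x. \<bar>f x\<bar> \<le> V x"
  have fM: "f \<in> borel_measurable M" using f sM by (simp cong: measurable_cong_sets)
  let ?X = "(if integrable M f \<and> integrable N f
         then ereal \<bar>(\<integral>x. f x \<partial>M) - (\<integral>x. f x \<partial>N)\<bar> else \<infinity>)"
  have "?X \<le> vnorm V M N" unfolding vnorm_def
    by (rule SUP_upper) (use fM fV in auto)
  then have X: "?X \<le> ereal B" using v by (rule order_trans)
  then have i: "integrable M f \<and> integrable N f" by (auto split: if_splits)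
  then show "integrable M f \<and> integrable N f \<and> \<bar>(\<integral>x. f x \<partial>M) - (\<integral>x. f x \<partial>N)\<bar> \<le> B"
    using X by simp
qed

lemma Bnd_tv:
  assumes b: "Bnd V M N B" and sM: "sets M = sets borel" and V1: "\<And>x. V x \<ge> 1"
  shows "tvnorm M N \<le> ereal B"
  unfolding tvnorm_def vnorm_def
proof (rule SUP_least)
  fix f :: "'a::euclidean_space \<Rightarrow> real"
  assume "f \<in> {f \<in> borel_measurable M. \<forall>x\<in>space M. \<bar>f x\<bar> \<le> 1}"
  then have fM: "f \<in> borel_measurable M" and f1: "\<forall>x\<in>space M. \<bar>f x\<bar> \<le> 1" by auto
  have f: "f \<in> borel_measurable borel" using fM sM by (simp cong: measurable_cong_sets)
  have sp: "space M = UNIV" using sets_eq_imp_space_eq[OF sM] by simp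
  have fV: "\<And>x. \<bar>f x\<bar> \<le> V x" using f1 V1 sp by (metis UNIV_I order_trans)
  show "(if integrable M f \<and> integrable N f
         then ereal \<bar>(\<integral>x. f x \<partial>M) - (\<integral>x. f x \<partial>N)\<bar> else \<infinity>) \<le> ereal B"
    using BndD[OF b f fV] by simp
qed
theorem theorem4:
  fixes \<pi> :: "nat \<Rightarrow> 'a::euclidean_space \<Rightarrow> real"
    and T :: "nat \<Rightarrow> 'a \<Rightarrow> 'a measure"
    and m :: "nat \<Rightarrow> nat"
    and V :: "'a \<Rightarrow> real"
    and C :: real
    and \<rho> :: "nat \<Rightarrow> real"
  assumes dens_meas: "\<And>t. \<pi> t \<in> borel_measurable borel"
    and dens_nonneg: "\<And>t x. \<pi> t x \<ge> 0"
    and dens_norm: "\<And>t. (\<integral>\<^sup>+x. ennreal (\<pi> t x) \<partial>lborel) = 1"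
    and kernel: "\<And>t. t \<ge> 1 \<Longrightarrow> T t \<in> borel \<rightarrow>\<^sub>M prob_algebra borel"
    and stationary: "\<And>t. t \<ge> 1 \<Longrightarrow> bind (density lborel (\<pi> t)) (T t) = density lborel (\<pi> t)"
    and m_pos: "\<And>t. t \<ge> 1 \<Longrightarrow> m t \<ge> 1"
    and V_meas: "V \<in> borel_measurable borel"
    and V_ge1: "\<And>x. V x \<ge> 1"
    and C_pos: "C > 0"
    and rho: "\<And>t. t \<ge> 1 \<Longrightarrow> 0 < \<rho> t \<and> \<rho> t < 1"
    and V2_int: "\<And>t. (\<integral>\<^sup>+x. ennreal ((V x)\<^sup>2 * \<pi> t x) \<partial>lborel) \<le> ennreal C"
    and drift: "\<And>t x. t \<ge> 1 \<Longrightarrow> vnorm V (T t x) (density lborel (\<pi> t)) \<le> ereal (V x * \<rho> t)"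
    and t_pos: "t \<ge> 1"
  shows "tvnorm (law \<pi> T m t) (density lborel (\<pi> t))
           \<le> ereal (\<Sum>s = 1..t. (\<Prod>u = s..t. \<rho> u ^ m u)
                         * (2 * sqrt C * hellinger (\<pi> s) (\<pi> (s - 1))))"
  proof -
  define e where "e t = (\<Sum>s = 1..t. (\<Prod>u = s..t. \<rho> u ^ m u) * (2 * sqrt C * hellinger (\<pi> s) (\<pi> (s - 1))))" for t
  have e_Suc: "e (Suc t) = \<rho> (Suc t) ^ m (Suc t) * (e t + 2 * sqrt C * hellinger (\<pi> (Suc t)) (\<pi> t))" for t
  proof -
    have "e (Suc t) = (\<Sum>s = 1..t. (\<Prod>u = s..Suc t. \<rho> u ^ m u) * (2 * sqrt C * hellinger (\<pi> s) (\<pi> (s - 1))))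
        + \<rho> (Suc t) ^ m (Suc t) * (2 * sqrt C * hellinger (\<pi> (Suc t)) (\<pi> t))"
      unfolding e_def by (simp add: sum.cl_ivl_Suc)
    also have "(\<Sum>s = 1..t. (\<Prod>u = s..Suc t. \<rho> u ^ m u) * (2 * sqrt C * hellinger (\<pi> s) (\<pi> (s - 1))))
        = (\<Sum>s = 1..t. \<rho> (Suc t) ^ m (Suc t) * ((\<Prod>u = s..t. \<rho> u ^ m u) * (2 * sqrt C * hellinger (\<pi> s) (\<pi> (s - 1)))))"
      by (rule sum.cong[OF refl]) (simp add: prod.cl_ivl_Suc)
    also have "\<dots> = \<rho> (Suc t) ^ m (Suc t) * e t"
      unfolding e_def by (simp add: sum_distrib_left)
    finally show ?thesis by (simp add: algebra_simps)
  qed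
  have V0: "\<And>x. V x \<ge> 0" using V_ge1 by (smt (verit))
  have main: "prob_space (law \<pi> T m t) \<and> sets (law \<pi> T m t) = sets borel \<and>
     Bnd V (law \<pi> T m t) (density lborel (\<pi> t)) (e t)" for t
  proof (induction t)
    case 0
    note D = dens_facts[OF dens_meas dens_nonneg dens_norm V_meas V2_int C_pos, of 0]
    have "Bnd V (density lborel (\<pi> 0)) (density lborel (\<pi> 0)) 0"
      unfolding Bnd_def
    proof (intro ballI impI conjI)
      fix f :: "'a \<Rightarrow> real" assume f: "f \<in> borel_measurable borel" and fV: "\<forall>x. \<bar>f x\<bar> \<le> V x"
      have "Bnd V (density lborel (\<pi> 0)) (density lborel (\<pi> 1)) (2 * sqrt C * hellinger (\<pi> 1) (\<pi> 0))"
        by (rule hell_bnd[OF dens_meas dens_nonneg dens_norm dens_meas dens_nonneg dens_norm V_meas V_ge1 V2_int V2_int C_pos])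
      then show "integrable (density lborel (\<pi> 0)) f" using BndD(1)[OF _ f] fV by blast
      then show "integrable (density lborel (\<pi> 0)) f" .
    qed simp
    then show ?case using D by (simp add: e_def)
  next
    case (Suc t)
    have t1: "Suc t \<ge> 1" by simp
    note D = dens_facts[OF dens_meas dens_nonneg dens_norm V_meas V2_int C_pos, of "Suc t"]
    have K: "T (Suc t) \<in> borel \<rightarrow>\<^sub>M prob_algebra borel" using kernel[OF t1] .
    have H: "Bnd V (density lborel (\<pi> t)) (density lborel (\<pi> (Suc t))) (2 * sqrt C * hellinger (\<pi> (Suc t)) (\<pi> t))"
      by (rule hell_bnd[OF dens_meas dens_nonneg dens_norm dens_meas dens_nonneg dens_norm V_meas V_ge1 V2_int V2_int C_pos])
    have B1: "Bnd V (law \<pi> T m t) (density lborel (\<pi> (Suc t))) (e t + 2 * sqrt C * hellinger (\<pi> (Suc t)) (\<pi> t))"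
      using Bnd_trans[OF _ H] Suc by blast
    have KB: "Bnd V (T (Suc t) x) (density lborel (\<pi> (Suc t))) (\<rho> (Suc t) * V x)" for x
    proof (rule vnorm_Bnd)
      show "vnorm V (T (Suc t) x) (density lborel (\<pi> (Suc t))) \<le> ereal (\<rho> (Suc t) * V x)"
        using drift[OF t1, of x] by (simp add: mult.commute)
      show "sets (T (Suc t) x) = sets borel"
        using measurable_space[OF K] by (auto simp: space_prob_algebra)
    qed
    have "Bnd V (bind (law \<pi> T m t) (kpow (T (Suc t)) (m (Suc t)))) (density lborel (\<pi> (Suc t)))
       (\<rho> (Suc t) ^ m (Suc t) * (e t + 2 * sqrt C * hellinger (\<pi> (Suc t)) (\<pi> t)))"
      by (rule contract_pow[OF K D(4) D(5) stationary[OF t1] _ KB V_meas V0])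
         (use rho[OF t1] Suc B1 in auto)
    moreover have "prob_space (bind (law \<pi> T m t) (kpow (T (Suc t)) (m (Suc t))))"
       "sets (bind (law \<pi> T m t) (kpow (T (Suc t)) (m (Suc t)))) = sets borel"
      using bind_prob[OF kpow_meas[OF K]] Suc by auto
    ultimately show ?case by (simp add: e_Suc)
  qed
  show ?thesis
    using Bnd_tv[of V "law \<pi> T m t" "density lborel (\<pi> t)" "e t"] main[of t] V_ge1
    unfolding e_def by blast
qed

end
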